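(* Let $(\Omega,\mathcal{F},\mathbf{P})$ be a probability space with $\sigma$-fields $\{\emptyset,\Omega\}=\mathcal{F}_0\subseteq\mathcal{F}_1\subseteq\cdots\subseteq\mathcal{F}_n\subseteq\mathcal{F}$, and let $(\xi_i,\mathcal{F}_i)_{i=1,\dots,n}$ be a sequence of supermartingale differences, i.e. each $\xi_i$ is real-valued, $\mathcal{F}_i$-measurable, integrable, and $\mathbf{E}(\xi_i\mid\mathcal{F}_{i-1})\le 0$. Assume $\mathbf{E}\xi_i^2<\infty$ for all $i\in[1,n]$. Let $S_k=\sum_{i=1}^k\xi_i$ and, for $y\ge 0$, \[ \mathrm{G}_k^{y}=\sum_{i=1}^k\Big(\mathbf{E}\big(\xi_i^2\mathbf{1}_{\{\xi_i\le y\}}\mid\mathcal{F}_{i-1}\big)+\xi_i^2\mathbf{1}_{\{\xi_i>y\}}\Big),\qquad k=1,\dots,n. \] Then for all $x,y\ge 0$ and $v>0$, \[ \mathbf{P}\Big(S_k\ge x\ \text{and}\ \mathrm{G}_k^{y}\le v^2\ \text{for some}\ k\in[1,n]\Big)\le B_1(x,y,v)\le B_2(x,y,v), \] where for $y>0$ \[ B_1(x,y,v)=\left(\frac{v^2}{xy+v^2}\right)^{\frac{x}{y}+\frac{v^2}{y^2}}e^{x/y},\qquad B_2(x,y,v)=\exp\left\{-\frac{x^2}{2(v^2+xy/3)}\right\}, \] and for $y=0$ one sets $B_1(x,0,v)=\lim_{y\to0+}B_1(x,y,v)=B_2(x,0,v)=\exp\{-x^2/(2v^2)\}$. *)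

theory Defs
  imports "HOL-Probability.Probability"
begin

definition partial_sum :: "(nat \<Rightarrow> 'a \<Rightarrow> real) \<Rightarrow> nat \<Rightarrow> 'a \<Rightarrow> real" where
  "partial_sum \<xi> k \<omega> = (\<Sum>i=1..k. \<xi> i \<omega>)"

definition G_var :: "'a measure \<Rightarrow> (nat \<Rightarrow> 'a measure) \<Rightarrow> (nat \<Rightarrow> 'a \<Rightarrow> real) \<Rightarrow> real \<Rightarrow> nat \<Rightarrow> 'a \<Rightarrow> real" where
  "G_var M F \<xi> y k \<omega> =
     (\<Sum>i=1..k. real_cond_exp M (F (i - 1))
                   (\<lambda>w. (\<xi> i w)\<^sup>2 * indicator {w. \<xi> i w \<le> y} w) \<omega>
               + (\<xi> i \<omega>)\<^sup>2 * indicator {w. \<xi> i w > y} \<omega>)"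

definition B1 :: "real \<Rightarrow> real \<Rightarrow> real \<Rightarrow> real" where
  "B1 x y v = (if y = 0 then exp (- x\<^sup>2 / (2 * v\<^sup>2))
               else (v\<^sup>2 / (x * y + v\<^sup>2)) powr (x / y + v\<^sup>2 / y\<^sup>2) * exp (x / y))"

definition B2 :: "real \<Rightarrow> real \<Rightarrow> real \<Rightarrow> real" where
  "B2 x y v = exp (- x\<^sup>2 / (2 * (v\<^sup>2 + x * y / 3)))"

end

theory Submission
  imports Defs
begin


lemma expA1: assumes "(s::real) \<le> 0" shows "exp s \<le> 1 + s + s\<^sup>2/2"
proof -
  define G where "G = (\<lambda>t::real. exp t - 1 - t - t\<^sup>2/2)"
  have "G s \<le> G 0"
  proof (rule deriv_nonneg_imp_mono[of s 0 G "\<lambda>t. exp t - 1 - t"])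
    fix t assume "t \<in> {s..0}"
    show "(G has_real_derivative exp t - 1 - t) (at t)" unfolding G_def
      by (auto intro!: derivative_eq_intros)
    show "0 \<le> exp t - 1 - t" using exp_ge_add_one_self[of t] by linarith
  qed (use assms in auto)
  then show ?thesis by (simp add: G_def)
qed

lemma lnA2: assumes "(s::real) \<ge> 0" shows "s - s\<^sup>2/2 \<le> ln (1 + s)"
proof -
  define G where "G = (\<lambda>t::real. ln (1+t) - t + t\<^sup>2/2)"
  have "G 0 \<le> G s"
  proof (rule deriv_nonneg_imp_mono[of 0 s G "\<lambda>t. 1/(1+t) - 1 + t"])
    fix t assume t: "t \<in> {0..s}"
    show "(G has_real_derivative 1/(1+t) - 1 + t) (at t)" unfolding G_def
      using t by (auto intro!: derivative_eq_intros)
    have "1/(1+t) - 1 + t = t\<^sup>2/(1+t)" using t by (simp add: field_simps power2_eq_square)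
    then show "0 \<le> 1/(1+t) - 1 + t" using t by simp
  qed (use assms in auto)
  then show ?thesis by (simp add: G_def)
qed

lemma expA2: assumes "(s::real) \<ge> 0" shows "exp (s - s\<^sup>2/2) \<le> 1 + s"
  using lnA2[OF assms] assms by (metis add_nonneg_pos exp_le_cancel_iff exp_ln zero_less_one add.commute)

lemma lnA4: assumes "(u::real) \<ge> 0" shows "2*u/(2+u) \<le> ln (1 + u)"
proof -
  define G where "G = (\<lambda>t::real. ln (1+t) - 2*t/(2+t))"
  have "G 0 \<le> G u"
  proof (rule deriv_nonneg_imp_mono[of 0 u G "\<lambda>t. 1/(1+t) - 4/(2+t)\<^sup>2"])
    fix t assume t: "t \<in> {0..u}"
    have "(G has_real_derivative 1/(1+t) - (2*(2+t) - 2*t)/(2+t)\<^sup>2) (at t)" unfolding G_def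
      using t by (auto intro!: derivative_eq_intros simp: power2_eq_square)
    moreover have "(2*(2+t) - 2*t)/(2+t)\<^sup>2 = 4/(2+t)\<^sup>2" by simp
    ultimately show "(G has_real_derivative 1/(1+t) - 4/(2+t)\<^sup>2) (at t)" by simp
    have "4*(1+t) \<le> (2+t)^2" by (simp add: power2_eq_square algebra_simps)
    then have "4/(2+t)\<^sup>2 \<le> 1/(1+t)" using t by (simp add: field_simps)
    then show "0 \<le> 1/(1+t) - 4/(2+t)\<^sup>2" by simp
  qed (use assms in auto)
  then show ?thesis by (simp add: G_def)
qed

lemma lnA5: assumes "(u::real) \<ge> 0" shows "u\<^sup>2/(2*(1+u/3)) \<le> (1+u)*ln(1+u) - u"
proof -
  define G where "G = (\<lambda>t::real. (1+t)*ln(1+t) - t - 3*t\<^sup>2/(6+2*t))"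
  have "G 0 \<le> G u"
  proof (rule deriv_nonneg_imp_mono[of 0 u G "\<lambda>t. ln (1 + t) - (6 * t * (6 + 2 * t) - 6 * t\<^sup>2) / ((6 + 2 * t) * (6 + 2 * t))"])
    fix t assume t: "t \<in> {0..u}"
    show "(G has_real_derivative ln (1 + t) - (6 * t * (6 + 2 * t) - 6 * t\<^sup>2) / ((6 + 2 * t) * (6 + 2 * t))) (at t)"
      unfolding G_def using t
      by (auto intro!: derivative_eq_intros)
    have t0: "0 \<le> t" using t by simp
    have "(6 * t * (6 + 2 * t) - 6 * t\<^sup>2) * (2+t) \<le> 2*t * ((6 + 2 * t) * (6 + 2 * t))"
    proof -
      have "2*t * ((6 + 2 * t) * (6 + 2 * t)) - (6 * t * (6 + 2 * t) - 6 * t\<^sup>2) * (2+t) = 2*t^3"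
        by (simp add: power2_eq_square power3_eq_cube algebra_simps)
      moreover have "0 \<le> t^3" using t0 by simp
      ultimately show ?thesis by linarith
    qed
    then have "(6 * t * (6 + 2 * t) - 6 * t\<^sup>2) / ((6 + 2 * t) * (6 + 2 * t)) \<le> 2*t/(2+t)"
      using t0 by (simp add: pos_divide_le_eq le_divide_eq mult.commute mult.left_commute)
    then show "0 \<le> ln (1 + t) - (6 * t * (6 + 2 * t) - 6 * t\<^sup>2) / ((6 + 2 * t) * (6 + 2 * t))"
      using lnA4[OF t0] by linarith
  qed (use assms in auto)
  moreover have "u\<^sup>2/(2*(1+u/3)) = 3*u\<^sup>2/(6+2*u)" using assms by (simp add: field_simps)
  ultimately show ?thesis by (simp add: G_def)
qed

lemma expA3: assumes "0 \<le> s" "s \<le> a" "0 < (a::real)"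
  shows "exp s - 1 - s \<le> (s/a)\<^sup>2 * (exp a - 1 - a)"
proof -
  have S: "(\<lambda>n. z^(n+2) / fact (n+2)) sums (exp z - 1 - z)" for z :: real
  proof -
    have "(\<lambda>n. z^n / fact n) sums exp z" using exp_converges[of z] by (simp add: scaleR_conv_of_real divide_inverse mult.commute)
    from sums_split_initial_segment[OF this, of 2] show ?thesis by (simp add: eval_nat_numeral diff_diff_eq)
  qed
  have F1: "(\<lambda>n. (s/a)\<^sup>2 * (a^(n+2) / fact (n+2))) sums ((s/a)\<^sup>2 * (exp a - 1 - a))"
    by (rule sums_mult[OF S])
  have F2: "s^(n+2)/fact(n+2) \<le> (s/a)\<^sup>2 * (a^(n+2) / fact (n+2))" for n
  proof -
    have "s^n \<le> a^n" using assms by (simp add: power_mono)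
    then have "s^n * s\<^sup>2 \<le> a^n * s\<^sup>2" by (simp add: mult_right_mono)
    moreover have "(s/a)\<^sup>2 * a^(n+2) = a^n * s\<^sup>2"
    proof -
      have "(s/a)\<^sup>2 * a\<^sup>2 = ((s/a)*a)\<^sup>2" by (simp only: power_mult_distrib)
      also have "(s/a)*a = s" using assms by simp
      finally have "(s/a)\<^sup>2 * a\<^sup>2 = s\<^sup>2" .
      moreover have "(s/a)\<^sup>2 * a^(n+2) = ((s/a)\<^sup>2 * a\<^sup>2) * a^n" by (simp only: power_add mult_ac)
      ultimately show ?thesis by (metis mult.commute)
    qed
    ultimately have "s^(n+2) \<le> (s/a)\<^sup>2 * a^(n+2)" using power_add[of s n 2] by linarith
    then have "s^(n+2)/fact(n+2) \<le> ((s/a)\<^sup>2 * a^(n+2))/fact(n+2)" by (rule divide_right_mono) simp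
    then show ?thesis by (metis times_divide_eq_right)
  qed
  show ?thesis by (rule sums_le[OF F2 S F1])
qed

definition gfun :: "real \<Rightarrow> real \<Rightarrow> real" where
  "gfun lam y = (if y = 0 then lam\<^sup>2/2 else (exp (lam*y) - 1 - lam*y)/y\<^sup>2)"

lemma gfun_ge: assumes "lam \<ge> 0" "y \<ge> 0" shows "lam\<^sup>2/2 \<le> gfun lam y"
proof (cases "y = 0")
  case False
  then have y: "y > 0" using assms by simp
  have "(lam*y)\<^sup>2/2 \<le> exp(lam*y) - 1 - lam*y" using exp_lower_Taylor_quadratic[of "lam*y"] assms by simp
  then have "((lam*y)\<^sup>2/2)/y\<^sup>2 \<le> (exp(lam*y) - 1 - lam*y)/y\<^sup>2" by (rule divide_right_mono) simp
  moreover have "((lam*y)\<^sup>2/2)/y\<^sup>2 = lam\<^sup>2/2" using y by (simp add: power_mult_distrib)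
  ultimately have A: "lam\<^sup>2/2 \<le> (exp(lam*y) - 1 - lam*y)/y\<^sup>2" by linarith
  have eq: "gfun lam y = (exp(lam*y) - 1 - lam*y)/y\<^sup>2" using False by (simp add: gfun_def)
  show ?thesis unfolding eq by (rule A)
qed (simp add: gfun_def)

lemma gfun_nonneg: assumes "lam \<ge> 0" "y \<ge> 0" shows "0 \<le> gfun lam y"
  using gfun_ge[OF assms] zero_le_power2[of lam] by linarith

lemma key_ineq:
  assumes lam: "lam \<ge> 0" and y: "y \<ge> 0"
  shows "exp (lam*t - gfun lam y * (if y < t then t\<^sup>2 else 0)) \<le> 1 + lam*t + gfun lam y * (if t \<le> y then t\<^sup>2 else 0)"
proof (cases "t \<le> y")
  case True
  note g = gfun_ge[OF lam y]
  show ?thesis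
  proof (cases "lam * t \<le> 0")
    case True
    have "exp (lam*t) \<le> 1 + lam*t + (lam*t)\<^sup>2/2" by (rule expA1[OF True])
    also have "(lam*t)\<^sup>2/2 = lam\<^sup>2/2 * t\<^sup>2" by (simp add: power_mult_distrib)
    also have "\<dots> \<le> gfun lam y * t\<^sup>2" by (rule mult_right_mono[OF g]) simp
    finally show ?thesis using \<open>t \<le> y\<close> by simp
  next
    case False
    then have lt: "lam > 0" "t > 0" using lam by (auto simp: zero_less_mult_iff mult_le_0_iff)
    then have y0: "y > 0" using \<open>t \<le> y\<close> by simp
    have "exp (lam*t) - 1 - lam*t \<le> (lam*t/(lam*y))\<^sup>2 * (exp (lam*y) - 1 - lam*y)"
    proof (rule expA3)
      show "0 \<le> lam * t" using lt by simp
      show "lam * t \<le> lam * y" using lt \<open>t \<le> y\<close> by simp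
      show "0 < lam * y" using lt y0 by simp
    qed
    also have "\<dots> = gfun lam y * t\<^sup>2" using lt y0 by (simp add: gfun_def power_divide)
    finally show ?thesis using \<open>t \<le> y\<close> by simp
  qed
next
  case False
  then have t: "t > y" "t > 0" using y by auto
  have ls: "lam * t \<ge> 0" using lam t by simp
  have "lam*t - gfun lam y * t\<^sup>2 \<le> lam*t - (lam*t)\<^sup>2/2"
  proof -
    have "lam\<^sup>2/2 * t\<^sup>2 \<le> gfun lam y * t\<^sup>2" by (rule mult_right_mono[OF gfun_ge[OF lam y]]) simp
    then show ?thesis by (simp add: power_mult_distrib)
  qed
  then have "exp (lam*t - gfun lam y * t\<^sup>2) \<le> exp (lam*t - (lam*t)\<^sup>2/2)" by simp
  also have "\<dots> \<le> 1 + lam * t" by (rule expA2[OF ls])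
  finally show ?thesis using t by simp
qed

lemma phi_bound:
  assumes lam: "lam \<ge> 0" and y: "y \<ge> 0"
  shows "exp (lam*t - gfun lam y * (if y < t then t\<^sup>2 else 0)) \<le> exp (lam*y + 1)"
proof (cases "t \<le> y")
  case True
  have "lam*t \<le> lam*y" by (rule mult_left_mono) (use True lam in auto)
  then show ?thesis using True by simp
next
  case False
  have "lam*t - gfun lam y * t\<^sup>2 \<le> lam*t - (lam*t)\<^sup>2/2"
  proof -
    have "lam\<^sup>2/2 * t\<^sup>2 \<le> gfun lam y * t\<^sup>2" by (rule mult_right_mono[OF gfun_ge[OF lam y]]) simp
    then show ?thesis by (simp add: power_mult_distrib)
  qed
  also have "\<dots> \<le> 1"
  proof -
    have "0 \<le> (lam*t - 1)\<^sup>2" by simp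
    then show ?thesis by (simp add: power2_eq_square algebra_simps)
  qed
  also have "1 \<le> lam*y + 1" using lam y by simp
  finally show ?thesis using False by simp
qed


lemma opt:
  assumes x: "x \<ge> 0" and y: "y \<ge> 0" and v: "v > 0"
  defines "lam0 \<equiv> (if y = 0 then x/v\<^sup>2 else ln(1 + x*y/v\<^sup>2)/y)"
  shows "lam0 \<ge> 0" "exp (-(lam0*x) + gfun lam0 y * v\<^sup>2) = B1 x y v" "B1 x y v \<le> B2 x y v"
proof -
  show "lam0 \<ge> 0" using x y v by (auto simp: lam0_def)
  have "exp (-(lam0*x) + gfun lam0 y * v\<^sup>2) = B1 x y v \<and> B1 x y v \<le> B2 x y v"
  proof (cases "y = 0")
    case True
    have "-(x/v\<^sup>2*x) + (x/v\<^sup>2)\<^sup>2/2 * v\<^sup>2 = - x\<^sup>2 / (2 * v\<^sup>2)"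
      using v by (simp add: power2_eq_square field_simps)
    then show ?thesis using True by (simp add: lam0_def gfun_def B1_def B2_def)
  next
    case False
    then have y0: "y > 0" using y by simp
    define u where "u = x*y/v\<^sup>2"
    have u0: "u \<ge> 0" using x y v by (simp add: u_def)
    define L where "L = ln (1 + u)"
    have lam: "lam0 = L/y" using False by (simp add: lam0_def L_def u_def)
    have e: "exp (lam0*y) = 1 + u" using u0 y0 by (simp add: lam L_def)
    have g: "gfun lam0 y = (u - L)/y\<^sup>2" using False e by (simp add: gfun_def lam L_def)
    have b: "v\<^sup>2/(x*y+v\<^sup>2) = 1/(1+u)" using v by (simp add: u_def field_simps)
    have lnb: "ln (v\<^sup>2/(x*y+v\<^sup>2)) = - L" unfolding b L_def using u0 by (simp add: ln_div)
    have pos: "x*y + v\<^sup>2 > 0" using x y v by (simp add: add_nonneg_pos)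
    have bpos: "v\<^sup>2/(x*y+v\<^sup>2) > 0" using v x y by (simp add: add_nonneg_pos)
    have B1e: "B1 x y v = exp (-((x/y + v\<^sup>2/y\<^sup>2) * L) + x/y)"
    proof -
      have "B1 x y v = (v\<^sup>2/(x*y+v\<^sup>2)) powr (x/y + v\<^sup>2/y\<^sup>2) * exp(x/y)" using False by (simp add: B1_def)
      also have "(v\<^sup>2/(x*y+v\<^sup>2)) powr (x/y + v\<^sup>2/y\<^sup>2) = exp((x/y + v\<^sup>2/y\<^sup>2) * ln(v\<^sup>2/(x*y+v\<^sup>2)))"
        using bpos pos v by (simp add: powr_def)
      also have "\<dots> = exp(-((x/y + v\<^sup>2/y\<^sup>2) * L))" unfolding lnb by simp
      finally show ?thesis by (simp add: mult_exp_exp algebra_simps)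
    qed
    have cu: "v\<^sup>2/y\<^sup>2 * u = x/y" using v y0 by (simp add: u_def power2_eq_square field_simps)
    have "-(lam0*x) + gfun lam0 y * v\<^sup>2 = -((x/y + v\<^sup>2/y\<^sup>2) * L) + x/y"
    proof -
      have "-(lam0*x) + gfun lam0 y * v\<^sup>2 = -(L/y*x) + (v\<^sup>2/y\<^sup>2 * u) - v\<^sup>2/y\<^sup>2 * L"
        unfolding g unfolding lam using y0 by (simp add: field_simps)
      then show ?thesis unfolding cu by (simp add: algebra_simps)
    qed
    moreover have "-((x/y + v\<^sup>2/y\<^sup>2) * L) + x/y \<le> - x\<^sup>2 / (2 * (v\<^sup>2 + x * y / 3))"
    proof -
      define c where "c = v\<^sup>2/y\<^sup>2"
      have c0: "c > 0" using v y0 by (simp add: c_def)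
      have "c * (u\<^sup>2/(2*(1+u/3))) \<le> c * ((1+u)*L - u)"
        unfolding L_def by (rule mult_left_mono[OF lnA5[OF u0]]) (use c0 in simp)
      moreover have "c * ((1+u)*L - u) = (x/y + v\<^sup>2/y\<^sup>2) * L - x/y"
      proof -
        have "c * ((1+u)*L - u) = c*L + (c*u)*L - c*u" by (simp add: algebra_simps)
        also have "\<dots> = (x/y + v\<^sup>2/y\<^sup>2) * L - x/y" unfolding c_def cu by (simp add: algebra_simps)
        finally show ?thesis .
      qed
      moreover have "c * (u\<^sup>2/(2*(1+u/3))) = x\<^sup>2 / (2 * (v\<^sup>2 + x * y / 3))"
      proof -
        have s1: "c * (u\<^sup>2/(2*(1+u/3))) = (c*u*u)/(2*(1+u/3))" by (simp add: power2_eq_square)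
        have s2: "c*u*u = x\<^sup>2/v\<^sup>2" using cu y0 v unfolding c_def by (simp add: u_def power2_eq_square field_simps)
        have s4: "v\<^sup>2*(2*(1+u/3)) = 2*(v\<^sup>2 + x*y/3)" using v by (simp add: u_def field_simps)
        have "(c*u*u)/(2*(1+u/3)) = x\<^sup>2/(v\<^sup>2*(2*(1+u/3)))" unfolding s2 by simp
        then show ?thesis unfolding s1 s4 .
      qed
      ultimately show ?thesis by linarith
    qed
    ultimately show ?thesis using B1e by (simp add: B2_def)
  qed
  then show "exp (-(lam0*x) + gfun lam0 y * v\<^sup>2) = B1 x y v" "B1 x y v \<le> B2 x y v" by auto
qed


lemma integrable_by_bound:
  fixes f h :: "'a \<Rightarrow> real"
  assumes "integrable M h" "f \<in> borel_measurable M" "AE \<omega> in M. \<bar>f \<omega>\<bar> \<le> K * \<bar>h \<omega>\<bar>"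
  shows "integrable M f"
proof -
  have i1: "integrable M (\<lambda>\<omega>. K * h \<omega>)" using assms(1) by simp
  have a: "AE \<omega> in M. norm (f \<omega>) \<le> norm (K * h \<omega>)"
    using assms(3) by eventually_elim (auto simp: abs_mult intro: order_trans[OF _ mult_right_mono])
  show ?thesis by (rule Bochner_Integration.integrable_bound[OF i1 assms(2) a])
qed

locale sm =
  fixes M :: "'a measure" and F :: "nat \<Rightarrow> 'a measure"
    and \<xi> :: "nat \<Rightarrow> 'a \<Rightarrow> real" and n :: nat and y lam :: real
  assumes ps: "prob_space M"
    and subalg: "\<And>i. i \<le> n \<Longrightarrow> subalgebra M (F i)"
    and monoF: "\<And>i j. i \<le> j \<Longrightarrow> j \<le> n \<Longrightarrow> sets (F i) \<subseteq> sets (F j)"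
    and measF: "\<And>i. i \<in> {1..n} \<Longrightarrow> \<xi> i \<in> borel_measurable (F i)"
    and intxi: "\<And>i. i \<in> {1..n} \<Longrightarrow> integrable M (\<xi> i)"
    and ce: "\<And>i. i \<in> {1..n} \<Longrightarrow> AE \<omega> in M. real_cond_exp M (F (i - 1)) (\<xi> i) \<omega> \<le> 0"
    and intsq: "\<And>i. i \<in> {1..n} \<Longrightarrow> integrable M (\<lambda>\<omega>. (\<xi> i \<omega>)\<^sup>2)"
    and y: "y \<ge> 0" and lam: "lam \<ge> 0"
begin

sublocale prob_space M by (rule ps)

definition "g = gfun lam y"
definition "pp i \<omega> = (if \<xi> i \<omega> \<le> y then (\<xi> i \<omega>)\<^sup>2 else 0)"
definition "qq i \<omega> = (if y < \<xi> i \<omega> then (\<xi> i \<omega>)\<^sup>2 else 0)"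
definition "cc i = real_cond_exp M (F (i - 1)) (pp i)"
definition "phi i \<omega> = exp (lam * \<xi> i \<omega> - g * qq i \<omega>)"
definition "Z k \<omega> = exp (lam * partial_sum \<xi> k \<omega> - g * G_var M F \<xi> y k \<omega>)"
definition "Phi = exp (lam * y + 1)"

lemma g0: "g \<ge> 0" unfolding g_def by (rule gfun_nonneg[OF lam y])

lemma sfs: "i \<le> n \<Longrightarrow> sigma_finite_subalgebra M (F i)"
  by (rule finite_measure_subalgebra_is_sigma_finite)
     (simp add: finite_measure_subalgebra_def finite_measure_subalgebra_axioms_def subalg finite_measure_axioms)

lemma sub_FF: "i \<le> m \<Longrightarrow> m \<le> n \<Longrightarrow> subalgebra (F m) (F i)"
  using subalg[of i] subalg[of m] monoF[of i m] by (auto simp: subalgebra_def)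

lemma meas_up: "i \<le> m \<Longrightarrow> m \<le> n \<Longrightarrow> f \<in> borel_measurable (F i) \<Longrightarrow> f \<in> borel_measurable (F m)"
  by (rule measurable_from_subalg[OF sub_FF])

lemma meas_M: "m \<le> n \<Longrightarrow> f \<in> borel_measurable (F m) \<Longrightarrow> f \<in> borel_measurable M"
  by (rule measurable_from_subalg[OF subalg])

lemma xi_Fm: "i \<in> {1..m} \<Longrightarrow> m \<le> n \<Longrightarrow> \<xi> i \<in> borel_measurable (F m)"
  by (rule meas_up[of i m]) (auto intro: measF)

lemma xi_M: "i \<in> {1..n} \<Longrightarrow> \<xi> i \<in> borel_measurable M"
  by (rule meas_M[of i]) (auto intro: measF)

lemma pp_M: "i \<in> {1..n} \<Longrightarrow> pp i \<in> borel_measurable M"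
  using xi_M[of i] unfolding pp_def by measurable

lemma qq_Fm: "i \<in> {1..m} \<Longrightarrow> m \<le> n \<Longrightarrow> qq i \<in> borel_measurable (F m)"
  using xi_Fm[of i m] unfolding qq_def by measurable

lemma cc_Fm: "i \<in> {1..m} \<Longrightarrow> m \<le> n \<Longrightarrow> cc i \<in> borel_measurable (F m)"
  unfolding cc_def by (rule meas_up[of "i - 1" m]) auto

lemma G_eq: "G_var M F \<xi> y k \<omega> = (\<Sum>i=1..k. cc i \<omega> + qq i \<omega>)"
proof -
  have "(\<lambda>w. (\<xi> i w)\<^sup>2 * indicator {w. \<xi> i w \<le> y} w) = pp i" for i
    by (auto simp: pp_def indicator_def fun_eq_iff)
  moreover have "(\<xi> i \<omega>)\<^sup>2 * indicator {w. \<xi> i w > y} \<omega> = qq i \<omega>" for i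
    by (auto simp: qq_def indicator_def)
  ultimately show ?thesis unfolding G_var_def cc_def by simp
qed

lemma S_Fm: "k \<le> m \<Longrightarrow> m \<le> n \<Longrightarrow> partial_sum \<xi> k \<in> borel_measurable (F m)"
  unfolding partial_sum_def by (rule borel_measurable_sum) (rule xi_Fm; auto)

lemma G_Fm: "k \<le> m \<Longrightarrow> m \<le> n \<Longrightarrow> G_var M F \<xi> y k \<in> borel_measurable (F m)"
proof -
  assume a: "k \<le> m" "m \<le> n"
  have "(\<lambda>\<omega>. \<Sum>i=1..k. cc i \<omega> + qq i \<omega>) \<in> borel_measurable (F m)"
  proof (rule borel_measurable_sum)
    fix i assume "i \<in> {1..k}"
    then have "i \<in> {1..m}" using a by auto
    then show "(\<lambda>\<omega>. cc i \<omega> + qq i \<omega>) \<in> borel_measurable (F m)"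
      using cc_Fm[of i m] qq_Fm[of i m] a by measurable
  qed
  moreover have "G_var M F \<xi> y k = (\<lambda>\<omega>. \<Sum>i=1..k. cc i \<omega> + qq i \<omega>)" by (rule ext) (rule G_eq)
  ultimately show ?thesis by simp
qed

lemma Z_Fm: "k \<le> m \<Longrightarrow> m \<le> n \<Longrightarrow> Z k \<in> borel_measurable (F m)"
  using S_Fm[of k m] G_Fm[of k m] unfolding Z_def by measurable

lemma Z_M: "k \<le> n \<Longrightarrow> Z k \<in> borel_measurable M"
  by (rule meas_M[OF _ Z_Fm[of k k]]) auto

lemma Z0: "Z 0 \<omega> = 1"
  by (simp add: Z_def partial_sum_def G_var_def)

lemma Z_Suc: "Z (Suc m) \<omega> = Z m \<omega> * phi (Suc m) \<omega> * exp (- g * cc (Suc m) \<omega>)"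
proof -
  have S: "partial_sum \<xi> (Suc m) \<omega> = partial_sum \<xi> m \<omega> + \<xi> (Suc m) \<omega>"
    by (simp add: partial_sum_def)
  have G: "G_var M F \<xi> y (Suc m) \<omega> = G_var M F \<xi> y m \<omega> + cc (Suc m) \<omega> + qq (Suc m) \<omega>"
    by (simp add: G_eq)
  show ?thesis unfolding Z_def phi_def S G by (simp add: mult_exp_exp algebra_simps)
qed

lemma Z_pos: "Z k \<omega> > 0" by (simp add: Z_def)

lemma phi_le: "phi i \<omega> \<le> Phi"
  using phi_bound[OF lam y, of "\<xi> i \<omega>"] unfolding phi_def Phi_def g_def qq_def
  by (simp split: if_splits)

lemma phi_key: "phi i \<omega> \<le> 1 + lam * \<xi> i \<omega> + g * pp i \<omega>"
  using key_ineq[OF lam y, of "\<xi> i \<omega>"] unfolding phi_def g_def qq_def pp_def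
  by (simp split: if_splits)

lemma Phi1: "Phi \<ge> 1" unfolding Phi_def using lam y by simp

lemma AEcc: "AE \<omega> in M. \<forall>i\<in>{1..n}. cc i \<omega> \<ge> 0"
proof (rule eventually_ball_finite)
  show "finite {1..n}" by simp
  show "\<forall>i\<in>{1..n}. AE \<omega> in M. cc i \<omega> \<ge> 0"
  proof
    fix i assume i: "i \<in> {1..n}"
    have "i - 1 \<le> n" using i by auto
    then interpret S: sigma_finite_subalgebra M "F (i - 1)" using sfs[of "i - 1"] by simp
    show "AE \<omega> in M. cc i \<omega> \<ge> 0" unfolding cc_def
      by (rule S.real_cond_exp_pos) (auto simp: pp_def intro: pp_M[OF i])
  qed
qed

lemma Z_bound_pt: "\<forall>i\<in>{1..n}. cc i \<omega> \<ge> 0 \<Longrightarrow> m \<le> n \<Longrightarrow> Z m \<omega> \<le> Phi ^ m"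
proof (induction m)
  case 0
  then show ?case by (simp add: Z0)
next
  case (Suc m)
  have c: "cc (Suc m) \<omega> \<ge> 0" using Suc.prems by auto
  have e: "exp (- g * cc (Suc m) \<omega>) \<le> 1" using c g0 by (simp add: mult_nonneg_nonneg)
  have "Z (Suc m) \<omega> = Z m \<omega> * phi (Suc m) \<omega> * exp (- g * cc (Suc m) \<omega>)" by (rule Z_Suc)
  also have "\<dots> \<le> Phi ^ m * Phi * 1"
  proof (intro mult_mono)
    show "Z m \<omega> \<le> Phi ^ m" using Suc by simp
    show "phi (Suc m) \<omega> \<le> Phi" by (rule phi_le)
  qed (use e Z_pos[of m \<omega>] Phi1 in \<open>auto simp: phi_def\<close>)
  finally show ?case by (simp add: mult.commute)
qed

lemma AE_Z: "AE \<omega> in M. \<forall>m\<le>n. Z m \<omega> \<le> Phi ^ m"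
  using AEcc by eventually_elim (auto intro: Z_bound_pt)

lemma int_ZC: assumes k: "k \<le> n" and C: "C \<in> sets M" shows "integrable M (\<lambda>\<omega>. Z k \<omega> * indicator C \<omega>)"
proof (rule integrable_const_bound[where B = "Phi ^ k"])
  show "AE \<omega> in M. norm (Z k \<omega> * indicator C \<omega>) \<le> Phi ^ k"
    using AE_Z proof eventually_elim
    case (elim \<omega>)
    then have "Z k \<omega> \<le> Phi ^ k" using k by auto
    then show ?case using Z_pos[of k \<omega>] Phi1 by (auto simp: indicator_def abs_mult)
  qed
  show "(\<lambda>\<omega>. Z k \<omega> * indicator C \<omega>) \<in> borel_measurable M" using Z_M[OF k] C by measurable
qed

lemma step:
  assumes m: "m < n" and C: "C \<in> sets (F m)"
  shows "(\<integral>\<omega>. Z (Suc m) \<omega> * indicator C \<omega> \<partial>M) \<le> (\<integral>\<omega>. Z m \<omega> * indicator C \<omega> \<partial>M)"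
proof -
  interpret S: sigma_finite_subalgebra M "F m" using sfs[of m] m by simp
  have i: "Suc m \<in> {1..n}" using m by simp
  have CM: "C \<in> sets M" using C subalg[of m] m by (auto simp: subalgebra_def)
  define K where "K = Phi ^ m"
  define H where "H \<omega> = Z m \<omega> * indicator C \<omega> * exp (- g * cc (Suc m) \<omega>)" for \<omega>
  have mn: "m \<le> n" using m by simp
  have ZF[measurable]: "Z m \<in> borel_measurable (F m)" by (rule Z_Fm[OF order_refl mn])
  have ccF[measurable]: "cc (Suc m) \<in> borel_measurable (F m)" unfolding cc_def by simp
  have CF[measurable]: "C \<in> sets (F m)" by (rule C)
  have HF: "H \<in> borel_measurable (F m)"
    unfolding H_def by measurable
  have HM: "H \<in> borel_measurable M" using meas_M[OF _ HF] m by simp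
  have H0: "H \<omega> \<ge> 0" for \<omega> unfolding H_def using Z_pos[of m \<omega>] by simp
  have HK: "AE \<omega> in M. H \<omega> \<le> K"
    using AEcc AE_Z proof eventually_elim
    case (elim \<omega>)
    have c: "cc (Suc m) \<omega> \<ge> 0" using elim i by blast
    have e: "exp (- g * cc (Suc m) \<omega>) \<le> 1" using c g0 by (simp add: mult_nonneg_nonneg)
    have z: "Z m \<omega> \<le> K" using elim m unfolding K_def by auto
    have "H \<omega> \<le> Z m \<omega> * 1 * 1" unfolding H_def
      by (intro mult_mono) (use e Z_pos[of m \<omega>] in \<open>auto simp: indicator_def\<close>)
    then show ?case using z by simp
  qed
  have K0: "K \<ge> 0" unfolding K_def using Phi1 by simp
  have eqZ: "Z (Suc m) \<omega> * indicator C \<omega> = H \<omega> * phi (Suc m) \<omega>" for \<omega>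
    unfolding H_def Z_Suc by (simp add: algebra_simps)
  have xiM: "\<xi> (Suc m) \<in> borel_measurable M" by (rule xi_M[OF i])
  have ppM: "pp (Suc m) \<in> borel_measurable M" by (rule pp_M[OF i])
  have phiM: "phi (Suc m) \<in> borel_measurable M"
    using xiM unfolding phi_def qq_def by measurable
  have ccdef: "cc (Suc m) = real_cond_exp M (F m) (pp (Suc m))" by (simp add: cc_def)
  have intH: "integrable M H"
    by (rule integrable_by_bound[of M "\<lambda>_. 1" _ K]) (use HM HK H0 in \<open>auto elim: AE_mp\<close>)
  have intHphi: "integrable M (\<lambda>\<omega>. H \<omega> * phi (Suc m) \<omega>)"
  proof (rule integrable_by_bound[of M "\<lambda>_. 1" _ "K * Phi"])
    show "AE \<omega> in M. \<bar>H \<omega> * phi (Suc m) \<omega>\<bar> \<le> K * Phi * \<bar>1\<bar>"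
      using HK proof eventually_elim
      case (elim \<omega>)
      have "H \<omega> * phi (Suc m) \<omega> \<le> K * Phi"
        by (intro mult_mono) (use elim H0 phi_le K0 in \<open>auto simp: phi_def\<close>)
      moreover have "0 \<le> H \<omega> * phi (Suc m) \<omega>" using H0 by (simp add: phi_def)
      ultimately show ?case by simp
    qed
  qed (use HM phiM in auto)
  have intHxi: "integrable M (\<lambda>\<omega>. H \<omega> * \<xi> (Suc m) \<omega>)"
  proof (rule integrable_by_bound[of M "\<xi> (Suc m)" _ K])
    show "AE \<omega> in M. \<bar>H \<omega> * \<xi> (Suc m) \<omega>\<bar> \<le> K * \<bar>\<xi> (Suc m) \<omega>\<bar>"
      using HK proof eventually_elim
      case (elim \<omega>)
      then show ?case using H0[of \<omega>] by (simp add: abs_mult mult_right_mono)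
    qed
  qed (use HM xiM intxi[OF i] in auto)
  have intHp: "integrable M (\<lambda>\<omega>. H \<omega> * pp (Suc m) \<omega>)"
  proof (rule integrable_by_bound[of M "\<lambda>\<omega>. (\<xi> (Suc m) \<omega>)\<^sup>2" _ K])
    show "AE \<omega> in M. \<bar>H \<omega> * pp (Suc m) \<omega>\<bar> \<le> K * \<bar>(\<xi> (Suc m) \<omega>)\<^sup>2\<bar>"
      using HK proof eventually_elim
      case (elim \<omega>)
      have "\<bar>pp (Suc m) \<omega>\<bar> \<le> (\<xi> (Suc m) \<omega>)\<^sup>2" by (simp add: pp_def)
      then have "\<bar>H \<omega>\<bar> * \<bar>pp (Suc m) \<omega>\<bar> \<le> K * (\<xi> (Suc m) \<omega>)\<^sup>2"
        using elim H0[of \<omega>] by (intro mult_mono) auto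
      then show ?case by (simp add: abs_mult)
    qed
  qed (use HM ppM intsq[OF i] in auto)
  note ce1 = S.real_cond_exp_intg[OF intHxi HF xiM]
  note cc1 = S.real_cond_exp_intg[OF intHp HF ppM]
  have ceneg: "AE \<omega> in M. real_cond_exp M (F m) (\<xi> (Suc m)) \<omega> \<le> 0"
    using ce[OF i] by simp
  have intZC: "integrable M (\<lambda>\<omega>. Z m \<omega> * indicator C \<omega>)"
    by (rule int_ZC) (use m CM in auto)
  have intHcc: "integrable M (\<lambda>\<omega>. H \<omega> * cc (Suc m) \<omega>)" using cc1(1) ccdef by simp
  have E0: "(\<integral>\<omega>. Z (Suc m) \<omega> * indicator C \<omega> \<partial>M) = (\<integral>\<omega>. H \<omega> * phi (Suc m) \<omega> \<partial>M)"
    by (simp add: eqZ)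
  have E1: "(\<integral>\<omega>. H \<omega> * phi (Suc m) \<omega> \<partial>M) \<le> (\<integral>\<omega>. H \<omega> + lam * (H \<omega> * \<xi> (Suc m) \<omega>) + g * (H \<omega> * pp (Suc m) \<omega>) \<partial>M)"
  proof (rule integral_mono)
    fix \<omega> assume "\<omega> \<in> space M"
    have "H \<omega> * phi (Suc m) \<omega> \<le> H \<omega> * (1 + lam * \<xi> (Suc m) \<omega> + g * pp (Suc m) \<omega>)"
      by (rule mult_left_mono[OF phi_key H0])
    then show "H \<omega> * phi (Suc m) \<omega> \<le> H \<omega> + lam * (H \<omega> * \<xi> (Suc m) \<omega>) + g * (H \<omega> * pp (Suc m) \<omega>)"
      by (simp add: algebra_simps)
  qed (use intHphi intH intHxi intHp in auto)
  have E2: "(\<integral>\<omega>. H \<omega> + lam * (H \<omega> * \<xi> (Suc m) \<omega>) + g * (H \<omega> * pp (Suc m) \<omega>) \<partial>M) = (\<integral>\<omega>. H \<omega> \<partial>M) + lam * (\<integral>\<omega>. H \<omega> * \<xi> (Suc m) \<omega> \<partial>M) + g * (\<integral>\<omega>. H \<omega> * pp (Suc m) \<omega> \<partial>M)"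
    using intH intHxi intHp by simp
  have E3: "(\<integral>\<omega>. H \<omega> * \<xi> (Suc m) \<omega> \<partial>M) = (\<integral>\<omega>. H \<omega> * real_cond_exp M (F m) (\<xi> (Suc m)) \<omega> \<partial>M)"
    using ce1(2) by simp
  have E4: "(\<integral>\<omega>. H \<omega> * pp (Suc m) \<omega> \<partial>M) = (\<integral>\<omega>. H \<omega> * cc (Suc m) \<omega> \<partial>M)"
    using cc1(2) ccdef by simp
  have E5: "(\<integral>\<omega>. H \<omega> * real_cond_exp M (F m) (\<xi> (Suc m)) \<omega> \<partial>M) \<le> 0"
  proof -
    have "(\<integral>\<omega>. H \<omega> * real_cond_exp M (F m) (\<xi> (Suc m)) \<omega> \<partial>M) \<le> (\<integral>\<omega>. 0 \<partial>M)"
    proof (rule integral_mono_AE)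
      show "AE \<omega> in M. H \<omega> * real_cond_exp M (F m) (\<xi> (Suc m)) \<omega> \<le> 0"
        using ceneg by eventually_elim (simp add: mult_nonneg_nonpos H0)
    qed (use ce1(1) in auto)
    then show ?thesis by simp
  qed
  have E5': "lam * (\<integral>\<omega>. H \<omega> * \<xi> (Suc m) \<omega> \<partial>M) \<le> 0"
    using E3 E5 lam by (simp add: mult_nonneg_nonpos)
  have E6: "(\<integral>\<omega>. H \<omega> + g * (H \<omega> * cc (Suc m) \<omega>) \<partial>M) = (\<integral>\<omega>. H \<omega> \<partial>M) + g * (\<integral>\<omega>. H \<omega> * cc (Suc m) \<omega> \<partial>M)"
    using intH intHcc by simp
  have E7: "(\<integral>\<omega>. H \<omega> + g * (H \<omega> * cc (Suc m) \<omega>) \<partial>M) \<le> (\<integral>\<omega>. Z m \<omega> * indicator C \<omega> \<partial>M)"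
  proof (rule integral_mono)
    fix \<omega> assume "\<omega> \<in> space M"
    have "exp (- g * cc (Suc m) \<omega>) * (1 + g * cc (Suc m) \<omega>) \<le> 1"
    proof -
      have "1 + g * cc (Suc m) \<omega> \<le> exp (g * cc (Suc m) \<omega>)" by (rule exp_ge_add_one_self)
      then have "exp (- g * cc (Suc m) \<omega>) * (1 + g * cc (Suc m) \<omega>) \<le> exp (- g * cc (Suc m) \<omega>) * exp (g * cc (Suc m) \<omega>)"
        by (rule mult_left_mono) simp
      also have "\<dots> = 1" by (simp add: mult_exp_exp)
      finally show ?thesis .
    qed
    then have "(Z m \<omega> * indicator C \<omega>) * (exp (- g * cc (Suc m) \<omega>) * (1 + g * cc (Suc m) \<omega>)) \<le> (Z m \<omega> * indicator C \<omega>) * 1"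
      by (rule mult_left_mono) (use Z_pos[of m \<omega>] in simp)
    then show "H \<omega> + g * (H \<omega> * cc (Suc m) \<omega>) \<le> Z m \<omega> * indicator C \<omega>"
      unfolding H_def by (simp add: algebra_simps)
  qed (use intH intHcc intZC in auto)
  have E4': "g * (\<integral>\<omega>. H \<omega> * pp (Suc m) \<omega> \<partial>M) = g * (\<integral>\<omega>. H \<omega> * cc (Suc m) \<omega> \<partial>M)"
    using E4 by simp
  show ?thesis using E0 E1 E2 E4' E5' E6 E7 by linarith
qed

definition "Aset x v k = {\<omega> \<in> space M. x \<le> partial_sum \<xi> k \<omega> \<and> G_var M F \<xi> y k \<omega> \<le> v\<^sup>2}"
definition "Rset x v m = (\<Union>k\<in>{1..m}. Aset x v k)"

lemma sp: "m \<le> n \<Longrightarrow> space (F m) = space M" using subalg[of m] by (auto simp: subalgebra_def)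

lemma FM: "m \<le> n \<Longrightarrow> sets (F m) \<subseteq> sets M" using subalg[of m] by (auto simp: subalgebra_def)

lemma A_F: assumes "k \<le> m" "m \<le> n" shows "Aset x v k \<in> sets (F m)"
proof -
  have [measurable]: "partial_sum \<xi> k \<in> borel_measurable (F m)" "G_var M F \<xi> y k \<in> borel_measurable (F m)"
    using S_Fm[OF assms] G_Fm[OF assms] by auto
  have "{\<omega> \<in> space (F m). x \<le> partial_sum \<xi> k \<omega> \<and> G_var M F \<xi> y k \<omega> \<le> v\<^sup>2} \<in> sets (F m)" by measurable
  then show ?thesis unfolding Aset_def sp[OF assms(2)] .
qed

lemma R_F: assumes "m \<le> n" shows "Rset x v m \<in> sets (F m)"
  unfolding Rset_def
proof (rule sets.finite_UN)
  fix k assume "k \<in> {1..m}"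
  then show "Aset x v k \<in> sets (F m)" using A_F[of k m] assms by auto
qed simp

lemma compl_F: assumes "m \<le> n" shows "space M - Rset x v m \<in> sets (F m)"
  using sets.compl_sets[OF R_F[OF assms]] sp[OF assms] by simp

lemma AZ:
  assumes "\<omega> \<in> Aset x v k"
  shows "1 \<le> exp (-(lam*x) + g * v\<^sup>2) * Z k \<omega>"
proof -
  have a1: "x \<le> partial_sum \<xi> k \<omega>" and a2: "G_var M F \<xi> y k \<omega> \<le> v\<^sup>2"
    using assms by (simp_all add: Aset_def)
  have x1: "lam * x \<le> lam * partial_sum \<xi> k \<omega>" by (rule mult_left_mono[OF a1 lam])
  have x2: "g * G_var M F \<xi> y k \<omega> \<le> g * v\<^sup>2" by (rule mult_left_mono[OF a2 g0])
  have "exp (-(lam*x) + g * v\<^sup>2) * Z k \<omega> = exp (-(lam*x) + g * v\<^sup>2 + (lam * partial_sum \<xi> k \<omega> - g * G_var M F \<xi> y k \<omega>))"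
    unfolding Z_def by (rule mult_exp_exp)
  moreover have "0 \<le> -(lam*x) + g * v\<^sup>2 + (lam * partial_sum \<xi> k \<omega> - g * G_var M F \<xi> y k \<omega>)"
    using x1 x2 by linarith
  ultimately show ?thesis by simp
qed

lemma claim0:
  fixes B :: real
  assumes "B = exp (-(lam*x) + g * v\<^sup>2)"
  shows "measure M (Rset x v 0) + B * (\<integral>\<omega>. Z 0 \<omega> * indicator (space M - Rset x v 0) \<omega> \<partial>M) \<le> B"
proof -
  have "Rset x v 0 = {}" by (simp add: Rset_def)
  moreover have "(\<integral>\<omega>. Z 0 \<omega> * indicator (space M) \<omega> \<partial>M) = 1"
    by (simp add: Z0 prob_space)
  ultimately show ?thesis by simp
qed

lemma claimS:
  fixes B :: real
  assumes Bdef: "B = exp (-(lam*x) + g * v\<^sup>2)" and m: "m < n"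
    and IH: "measure M (Rset x v m) + B * (\<integral>\<omega>. Z m \<omega> * indicator (space M - Rset x v m) \<omega> \<partial>M) \<le> B"
  shows "measure M (Rset x v (Suc m)) + B * (\<integral>\<omega>. Z (Suc m) \<omega> * indicator (space M - Rset x v (Suc m)) \<omega> \<partial>M) \<le> B"
proof -
  define A where "A = Aset x v"
  define R where "R = Rset x v"
  have B0: "B \<ge> 0" unfolding Bdef by simp
  have m2: "m \<le> n" "Suc m \<le> n" using m by auto
  define D where "D = A (Suc m) \<inter> (space M - R m)"
  have AM: "A (Suc m) \<in> sets M" using A_F[of "Suc m" "Suc m"] FM[of "Suc m"] m2 unfolding A_def by auto
  have RM: "R m \<in> sets M" using R_F[of m] FM[of m] m2 unfolding R_def by auto
  have DM: "D \<in> sets M" unfolding D_def using AM RM by auto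
  have DS: "D \<subseteq> space M" unfolding D_def by auto
  have Rsuc0: "R (Suc m) = A (Suc m) \<union> R m"
    unfolding R_def Rset_def A_def by (simp add: atLeastAtMostSuc_conv)
  have AS: "A (Suc m) \<subseteq> space M" unfolding A_def Aset_def by blast
  have Rsuc: "R (Suc m) = R m \<union> D"
    unfolding Rsuc0 D_def using AS by blast
  have meas: "measure M (R (Suc m)) = measure M (R m) + measure M D"
    unfolding Rsuc by (rule finite_measure_Union[OF RM DM]) (auto simp: D_def)
  have intD: "integrable M (\<lambda>\<omega>. Z (Suc m) \<omega> * indicator D \<omega>)" by (rule int_ZC[OF m2(2) DM])
  have RsM: "space M - R (Suc m) \<in> sets M" using compl_F[of "Suc m"] FM[of "Suc m"] m2 unfolding R_def by auto
  have int1: "integrable M (\<lambda>\<omega>. Z (Suc m) \<omega> * indicator (space M - R (Suc m)) \<omega>)" by (rule int_ZC[OF m2(2) RsM])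
  have mD: "measure M D \<le> B * (\<integral>\<omega>. Z (Suc m) \<omega> * indicator D \<omega> \<partial>M)"
  proof -
    have "measure M D = (\<integral>\<omega>. indicator D \<omega> \<partial>M)" using DS by (simp add: Int_absorb2)
    also have "\<dots> \<le> (\<integral>\<omega>. B * (Z (Suc m) \<omega> * indicator D \<omega>) \<partial>M)"
    proof (rule integral_mono)
      show "integrable M (\<lambda>\<omega>. indicator D \<omega> :: real)"
        by (rule integrable_real_indicator[OF DM]) (simp add: less_top[symmetric] emeasure_finite)
      show "integrable M (\<lambda>\<omega>. B * (Z (Suc m) \<omega> * indicator D \<omega>))" using intD by simp
      fix \<omega> assume "\<omega> \<in> space M"
      show "indicator D \<omega> \<le> B * (Z (Suc m) \<omega> * indicator D \<omega>)"
      proof (cases "\<omega> \<in> D")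
        case True
        then have "\<omega> \<in> Aset x v (Suc m)" unfolding D_def A_def by blast
        then have "1 \<le> B * Z (Suc m) \<omega>" unfolding Bdef by (rule AZ)
        then show ?thesis using True by simp
      qed simp
    qed
    also have "\<dots> = B * (\<integral>\<omega>. Z (Suc m) \<omega> * indicator D \<omega> \<partial>M)" by simp
    finally show ?thesis .
  qed
  have pt: "indicator D \<omega> + indicator (space M - R (Suc m)) \<omega> = (indicator (space M - R m) \<omega> :: real)" for \<omega>
  proof (cases "\<omega> \<in> D")
    case True
    then have "\<omega> \<notin> space M - R (Suc m)" "\<omega> \<in> space M - R m" unfolding Rsuc D_def by auto
    then show ?thesis using True by simp
  next
    case False
    then have "(\<omega> \<in> space M - R (Suc m)) = (\<omega> \<in> space M - R m)" unfolding Rsuc D_def by auto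
    then show ?thesis using False by (simp add: indicator_def)
  qed
  have split: "(\<integral>\<omega>. Z (Suc m) \<omega> * indicator D \<omega> \<partial>M) + (\<integral>\<omega>. Z (Suc m) \<omega> * indicator (space M - R (Suc m)) \<omega> \<partial>M)
      = (\<integral>\<omega>. Z (Suc m) \<omega> * indicator (space M - R m) \<omega> \<partial>M)"
  proof -
    have "(\<lambda>\<omega>. Z (Suc m) \<omega> * indicator D \<omega> + Z (Suc m) \<omega> * indicator (space M - R (Suc m)) \<omega>)
        = (\<lambda>\<omega>. Z (Suc m) \<omega> * indicator (space M - R m) \<omega>)"
      by (rule ext) (simp only: distrib_left[symmetric] pt)
    then show ?thesis using Bochner_Integration.integral_add[OF intD int1] by simp
  qed
  have st: "(\<integral>\<omega>. Z (Suc m) \<omega> * indicator (space M - R m) \<omega> \<partial>M) \<le> (\<integral>\<omega>. Z m \<omega> * indicator (space M - R m) \<omega> \<partial>M)"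
    unfolding R_def by (rule step[OF m compl_F[OF m2(1)]])
  have st': "B * (\<integral>\<omega>. Z (Suc m) \<omega> * indicator (space M - R m) \<omega> \<partial>M) \<le> B * (\<integral>\<omega>. Z m \<omega> * indicator (space M - R m) \<omega> \<partial>M)"
    by (rule mult_left_mono[OF st B0])
  have dist: "B * ((\<integral>\<omega>. Z (Suc m) \<omega> * indicator D \<omega> \<partial>M) + (\<integral>\<omega>. Z (Suc m) \<omega> * indicator (space M - R (Suc m)) \<omega> \<partial>M))
     = B * (\<integral>\<omega>. Z (Suc m) \<omega> * indicator D \<omega> \<partial>M) + B * (\<integral>\<omega>. Z (Suc m) \<omega> * indicator (space M - R (Suc m)) \<omega> \<partial>M)"
    by (simp add: distrib_left)
  have split': "B * ((\<integral>\<omega>. Z (Suc m) \<omega> * indicator D \<omega> \<partial>M) + (\<integral>\<omega>. Z (Suc m) \<omega> * indicator (space M - R (Suc m)) \<omega> \<partial>M))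
     = B * (\<integral>\<omega>. Z (Suc m) \<omega> * indicator (space M - R m) \<omega> \<partial>M)" by (simp only: split)
  have IH': "measure M (R m) + B * (\<integral>\<omega>. Z m \<omega> * indicator (space M - R m) \<omega> \<partial>M) \<le> B"
    using IH unfolding R_def .
  have "measure M (R (Suc m)) + B * (\<integral>\<omega>. Z (Suc m) \<omega> * indicator (space M - R (Suc m)) \<omega> \<partial>M) \<le> B"
    using IH' meas mD split' st' dist by linarith
  then show ?thesis unfolding R_def .
qed

lemma claim:
  fixes B :: real
  assumes "B = exp (-(lam*x) + g * v\<^sup>2)" "m \<le> n"
  shows "measure M (Rset x v m) + B * (\<integral>\<omega>. Z m \<omega> * indicator (space M - Rset x v m) \<omega> \<partial>M) \<le> B"
  using assms(2)
proof (induction m)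
  case 0
  show ?case by (rule claim0[OF assms(1)])
next
  case (Suc m)
  then show ?case using claimS[OF assms(1), of m] by simp
qed

lemma main:
  fixes x v :: real
  shows "measure M {\<omega> \<in> space M. \<exists>k\<in>{1..n}. partial_sum \<xi> k \<omega> \<ge> x \<and> G_var M F \<xi> y k \<omega> \<le> v\<^sup>2}
           \<le> exp (-(lam*x) + g * v\<^sup>2)"
proof -
  define B where "B = exp (-(lam*x) + g * v\<^sup>2)"
  have B0: "B \<ge> 0" unfolding B_def by simp
  have nn: "0 \<le> Z n \<omega> * indicator (space M - Rset x v n) \<omega>" for \<omega> using Z_pos[of n \<omega>] by (simp add: less_imp_le)
  have nonneg: "0 \<le> (\<integral>\<omega>. Z n \<omega> * indicator (space M - Rset x v n) \<omega> \<partial>M)"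
    by (rule integral_nonneg_AE[OF AE_I2[OF nn]])
  have "0 \<le> B * (\<integral>\<omega>. Z n \<omega> * indicator (space M - Rset x v n) \<omega> \<partial>M)" by (rule mult_nonneg_nonneg[OF B0 nonneg])
  then have RB: "measure M (Rset x v n) \<le> B" using claim[OF B_def, of n] by linarith
  have EQ: "{\<omega> \<in> space M. \<exists>k\<in>{1..n}. partial_sum \<xi> k \<omega> \<ge> x \<and> G_var M F \<xi> y k \<omega> \<le> v\<^sup>2} = Rset x v n"
  proof (intro equalityI subsetI)
    fix \<omega> assume "\<omega> \<in> {\<omega> \<in> space M. \<exists>k\<in>{1..n}. partial_sum \<xi> k \<omega> \<ge> x \<and> G_var M F \<xi> y k \<omega> \<le> v\<^sup>2}"
    then obtain k where k: "k \<in> {1..n}" "\<omega> \<in> space M" "x \<le> partial_sum \<xi> k \<omega>" "G_var M F \<xi> y k \<omega> \<le> v\<^sup>2" by auto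
    then have "\<omega> \<in> Aset x v k" unfolding Aset_def by simp
    then show "\<omega> \<in> Rset x v n" unfolding Rset_def using k(1) by (rule UN_I[rotated])
  next
    fix \<omega> assume "\<omega> \<in> Rset x v n"
    then obtain k where k: "k \<in> {1..n}" "\<omega> \<in> Aset x v k" unfolding Rset_def by (rule UN_E)
    then show "\<omega> \<in> {\<omega> \<in> space M. \<exists>k\<in>{1..n}. partial_sum \<xi> k \<omega> \<ge> x \<and> G_var M F \<xi> y k \<omega> \<le> v\<^sup>2}"
      unfolding Aset_def by auto
  qed
  show ?thesis unfolding EQ using RB unfolding B_def .
qed

end


theorem theorem2p1:
  fixes M :: "'a measure" and F :: "nat \<Rightarrow> 'a measure"
    and \<xi> :: "nat \<Rightarrow> 'a \<Rightarrow> real" and n :: nat and x y v :: real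
  assumes "prob_space M"
    and "\<And>i. i \<le> n \<Longrightarrow> subalgebra M (F i)"
    and "\<And>i j. i \<le> j \<Longrightarrow> j \<le> n \<Longrightarrow> sets (F i) \<subseteq> sets (F j)"
    and "sets (F 0) = {{}, space M}"
    and "\<And>i. i \<in> {1..n} \<Longrightarrow> \<xi> i \<in> borel_measurable (F i)"
    and "\<And>i. i \<in> {1..n} \<Longrightarrow> integrable M (\<xi> i)"
    and "\<And>i. i \<in> {1..n} \<Longrightarrow> AE \<omega> in M. real_cond_exp M (F (i - 1)) (\<xi> i) \<omega> \<le> 0"
    and "\<And>i. i \<in> {1..n} \<Longrightarrow> integrable M (\<lambda>\<omega>. (\<xi> i \<omega>)\<^sup>2)"
    and "x \<ge> 0" and "y \<ge> 0" and "v > 0"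
  shows "measure M {\<omega> \<in> space M. \<exists>k\<in>{1..n}. partial_sum \<xi> k \<omega> \<ge> x \<and> G_var M F \<xi> y k \<omega> \<le> v\<^sup>2}
           \<le> B1 x y v
         \<and> B1 x y v \<le> B2 x y v"
proof -
  define lam0 where "lam0 = (if y = 0 then x/v\<^sup>2 else ln(1 + x*y/v\<^sup>2)/y)"
  note o = opt[OF assms(9,10,11), folded lam0_def]
  interpret S: sm M F \<xi> n y lam0
    by (rule sm.intro) (use assms o(1) in auto)
  have "measure M {\<omega> \<in> space M. \<exists>k\<in>{1..n}. partial_sum \<xi> k \<omega> \<ge> x \<and> G_var M F \<xi> y k \<omega> \<le> v\<^sup>2}
           \<le> exp (-(lam0*x) + S.g * v\<^sup>2)" by (rule S.main)
  also have "\<dots> = B1 x y v" using o(2) by (simp add: S.g_def)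
  finally show ?thesis using o(3) by simp
qed


end
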